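(* Let $n\ge2$ and $\rho\in\mathbb{C}\setminus\{-1,1\}$. The following four statements are equivalent: (i) all $n$ eigenvalues of $K_n(\rho)$ lie in $\mathrm{range}\{\sigma(\rho,\theta)\}$; (ii) all $2n$ zeros of $p_{2n}(\rho,z)$ lie on the unit circle; (iii) $-1<\rho<1$; (iv) $K_n(\rho)$ is positive definite.
   Context: $K_n(\rho)=\left[\rho^{|j-k|}\right]_{j,k=1}^n$ (with $\rho^0=1$). $p_{2n}(\rho,z)=z^{2n}+(1+\rho^2)\sum_{k=1}^{n-1}z^{2k}-2\rho\sum_{k=0}^{n-1}z^{2k+1}+1$. $\sigma(\rho,\theta)=\frac{1-\rho^2}{1-2\rho\cos\theta+\rho^2}$ and $\mathrm{range}\{\sigma(\rho,\theta)\}=\{\sigma(\rho,\theta):\theta\in(-\pi,\pi],\ 1-2\rho\cos\theta+\rho^2\neq0\}$. Positive definite means $x^*K_n(\rho)x>0$ for all nonzero $x\in\mathbb{C}^n$. *)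

theory Defs
  imports "Jordan_Normal_Form.Char_Poly"
begin

text \<open>The Kac-Murdock-Szego matrix K_n(rho) = [rho^|j-k|], indices shifted to 0..n-1.\<close>
definition KMS :: "nat \<Rightarrow> complex \<Rightarrow> complex mat" where
  "KMS n \<rho> = mat n n (\<lambda>(j, k). \<rho> ^ (if k \<le> j then j - k else k - j))"

definition p2n :: "nat \<Rightarrow> complex \<Rightarrow> complex \<Rightarrow> complex" where
  "p2n n \<rho> z = z ^ (2 * n) + (1 + \<rho>\<^sup>2) * (\<Sum>k\<in>{1..n-1}. z ^ (2 * k))
      - 2 * \<rho> * (\<Sum>k\<in>{0..n-1}. z ^ (2 * k + 1)) + 1"

definition sigma :: "complex \<Rightarrow> real \<Rightarrow> complex" where
  "sigma \<rho> \<theta> = (1 - \<rho>\<^sup>2) / (1 - 2 * \<rho> * complex_of_real (cos \<theta>) + \<rho>\<^sup>2)"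

definition sigma_range :: "complex \<Rightarrow> complex set" where
  "sigma_range \<rho> = {sigma \<rho> \<theta> | \<theta>. \<theta> \<in> {-pi<..pi} \<and>
      1 - 2 * \<rho> * complex_of_real (cos \<theta>) + \<rho>\<^sup>2 \<noteq> 0}"

definition pos_def_mat :: "nat \<Rightarrow> complex mat \<Rightarrow> bool" where
  "pos_def_mat n A = (\<forall>x \<in> carrier_vec n. x \<noteq> 0\<^sub>v n \<longrightarrow>
     (let q = (\<Sum>j<n. \<Sum>k<n. cnj (x $ j) * A $$ (j, k) * x $ k) in q \<in> \<real> \<and> Re q > 0))"

end

theory Submission
  imports Defs
begin

lemma geom_even: "((z::complex)^2 - 1) * (\<Sum>k<n. z^(2*k)) = z^(2*n) - 1"
  by (induction n) (auto simp: algebra_simps power_add power_mult_distrib power2_eq_square mult_2)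

lemma p2n_factor:
  assumes "n \<ge> 1"
  shows "(z^2 - 1) * p2n n \<rho> z = (z^n * (z - \<rho>))^2 - (1 - \<rho>*z)^2"
proof -
  define S where "S = (\<Sum>k<n. z^(2*k))"
  have s1: "(\<Sum>k\<in>{1..n-1}. z ^ (2 * k)) = S - 1"
  proof -
    have "{..<n} = insert 0 {1..n-1}" using assms by auto
    then have "S = 1 + (\<Sum>k\<in>{1..n-1}. z ^ (2 * k))" unfolding S_def by simp
    then show ?thesis by simp
  qed
  have s2: "(\<Sum>k\<in>{0..n-1}. z ^ (2 * k + 1)) = z * S"
  proof -
    have "{0..n-1} = {..<n}" using assms by auto
    then show ?thesis unfolding S_def by (simp add: sum_distrib_left algebra_simps)
  qed
  have g: "(z^2 - 1) * S = z^(2*n) - 1" unfolding S_def by (rule geom_even)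
  have "(z^2 - 1) * p2n n \<rho> z = (z^2-1) * z^(2*n) + (1+\<rho>^2) * ((z^2-1)*S) - (1+\<rho>^2)*(z^2-1)
      - 2*\<rho>*z*((z^2-1)*S) + (z^2-1)"
    unfolding p2n_def s1 s2 by (simp add: algebra_simps)
  also have "\<dots> = (z^n * (z - \<rho>))^2 - (1 - \<rho>*z)^2"
  proof -
    have w: "z^(2*n) = (z^n)^2" by (metis power_mult mult.commute)
    have aux: "\<And>w::complex. (z\<^sup>2 - 1) * w\<^sup>2 + (1 + \<rho>\<^sup>2) * (w\<^sup>2 - 1) - (1 + \<rho>\<^sup>2) * (z\<^sup>2 - 1) -
      2 * \<rho> * z * (w\<^sup>2 - 1) + (z\<^sup>2 - 1) = (w * (z - \<rho>))\<^sup>2 - (1 - \<rho> * z)\<^sup>2"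
      by (simp add: power2_eq_square algebra_simps)
    show ?thesis unfolding g w by (rule aux)
  qed
  finally show ?thesis .
qed

lemma p2n_zero: "n \<ge> 1 \<Longrightarrow> p2n n \<rho> 0 = 1"
  unfolding p2n_def by (auto simp: power_0_left)

lemma norm_diff_identity:
  fixes r :: real and z :: complex
  shows "(cmod (z - of_real r))^2 - (cmod (1 - of_real r * z))^2 = ((cmod z)^2 - 1) * (1 - r^2)"
  unfolding cmod_power2 by (simp add: algebra_simps power2_eq_square)

lemma C_imp_B:
  assumes n: "n \<ge> 1" and r: "\<bar>r\<bar> < 1" and p: "p2n n (of_real r) z = 0"
  shows "cmod z = 1"
proof (rule ccontr)
  assume ne: "cmod z \<noteq> 1"
  define \<rho> where "\<rho> = (of_real r :: complex)"
  have "(z^n * (z - \<rho>))^2 = (1 - \<rho>*z)^2"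
    using p2n_factor[OF n, of z \<rho>] p unfolding \<rho>_def by simp
  then have "cmod ((z^n * (z - \<rho>))^2) = cmod ((1 - \<rho>*z)^2)" by simp
  then have "((cmod z)^n * cmod (z - \<rho>))^2 = (cmod (1 - \<rho>*z))^2"
    by (simp add: norm_power norm_mult power_mult_distrib)
  then have eq: "(cmod z)^n * cmod (z - \<rho>) = cmod (1 - \<rho>*z)"
    by (simp add: power2_eq_iff_nonneg)
  have id: "(cmod (z - \<rho>))^2 - (cmod (1 - \<rho> * z))^2 = ((cmod z)^2 - 1) * (1 - r^2)"
    unfolding \<rho>_def by (rule norm_diff_identity)
  have r2: "1 - r^2 > 0" using r by (simp add: abs_less_iff power2_eq_square) (smt (verit) mult_less_cancel_right2 mult_minus_left)
  show False
  proof (cases "cmod z > 1")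
    case True
    then have "(cmod z)^2 > 1" by (intro one_less_power) auto
    then have "(cmod (z - \<rho>))^2 > (cmod (1 - \<rho> * z))^2" 
    proof -
      have "((cmod z)^2 - 1) * (1 - r^2) > 0" using \<open>(cmod z)^2 > 1\<close> r2 by (intro mult_pos_pos) auto
      then show ?thesis using id by linarith
    qed
    then have lt: "cmod (z - \<rho>) > cmod (1 - \<rho> * z)" by (rule power_less_imp_less_base) simp
    have "(cmod z)^n \<ge> 1" using True by (intro one_le_power) auto
    then have "1 * cmod (z - \<rho>) \<le> (cmod z)^n * cmod (z - \<rho>)" by (intro mult_right_mono) auto
    then have "(cmod z)^n * cmod (z - \<rho>) \<ge> cmod (z - \<rho>)" by linarith
    then show False using eq lt by linarith
  next
    case False
    then have lt1: "cmod z < 1" using ne by simp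
    then have "(cmod z)^2 < 1" by (simp add: power_less_one_iff)
    then have "(cmod (z - \<rho>))^2 < (cmod (1 - \<rho> * z))^2" 
    proof -
      have "((cmod z)^2 - 1) * (1 - r^2) < 0" using \<open>(cmod z)^2 < 1\<close> r2 by (intro mult_neg_pos) auto
      then show ?thesis using id by linarith
    qed
    then have lt: "cmod (z - \<rho>) < cmod (1 - \<rho> * z)" by (rule power_less_imp_less_base) simp
    have "(cmod z)^n \<le> 1" using lt1 by (intro power_le_one) auto
    then have "(cmod z)^n * cmod (z - \<rho>) \<le> cmod (z - \<rho>)" by (intro mult_left_le_one_le) auto
    then show False using eq lt by linarith
  qed
qed

definition dd :: "nat \<Rightarrow> nat \<Rightarrow> nat" where
  "dd j k = (if k \<le> j then j - k else k - j)"

lemma dd_Suc[simp]: "dd (Suc j) (Suc k) = dd j k" and dd_0[simp]: "dd 0 k = k" "dd k 0 = k"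
  unfolding dd_def by auto

definition QF :: "nat \<Rightarrow> complex \<Rightarrow> (nat \<Rightarrow> complex) \<Rightarrow> complex" where
  "QF n \<rho> x = (\<Sum>j<n. \<Sum>k<n. cnj (x j) * \<rho> ^ dd j k * x k)"

definition gg :: "nat \<Rightarrow> complex \<Rightarrow> (nat \<Rightarrow> complex) \<Rightarrow> nat \<Rightarrow> complex" where
  "gg n \<rho> x m = (\<Sum>i<n-m. \<rho>^i * x (m+i))"

lemma gg_Suc_0: "gg (Suc n) \<rho> x 0 = x 0 + \<rho> * gg n \<rho> (\<lambda>j. x (Suc j)) 0"
  unfolding gg_def by (simp add: sum.lessThan_Suc_shift sum_distrib_left algebra_simps del: sum.lessThan_Suc)

lemma gg_Suc_Suc: "gg (Suc n) \<rho> x (Suc m) = gg n \<rho> (\<lambda>j. x (Suc j)) m"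
  unfolding gg_def by simp

lemma gg_rec: "m < n \<Longrightarrow> gg n \<rho> x m = x m + \<rho> * gg n \<rho> x (Suc m)"
proof -
  assume m: "m < n"
  then have e: "n - m = Suc (n - Suc m)" by simp
  show ?thesis unfolding gg_def e
    by (simp add: sum.lessThan_Suc_shift sum_distrib_left algebra_simps del: sum.lessThan_Suc)
qed

lemma gg_n: "gg n \<rho> x n = 0" unfolding gg_def by simp

lemma QF_id:
  assumes r: "cnj \<rho> = \<rho>"
  shows "QF n \<rho> x = \<rho>^2 * (gg n \<rho> x 0 * cnj (gg n \<rho> x 0))
          + (1 - \<rho>^2) * (\<Sum>m<n. gg n \<rho> x m * cnj (gg n \<rho> x m))"
proof (induction n arbitrary: x)
  case 0
  then show ?case by (simp add: QF_def gg_def)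
next
  case (Suc n)
  define sx where "sx = (\<lambda>j. x (Suc j))"
  define G where "G = gg n \<rho> sx 0"
  have G_def': "G = (\<Sum>i<n. \<rho>^i * x (Suc i))" unfolding G_def gg_def sx_def by simp
  have cG: "cnj G = (\<Sum>i<n. \<rho>^i * cnj (x (Suc i)))" unfolding G_def' using r by simp
  have QFs: "QF (Suc n) \<rho> x = cnj (x 0) * x 0 + (\<Sum>k<n. cnj (x 0) * \<rho> ^ Suc k * x (Suc k))
      + (\<Sum>j<n. cnj (x (Suc j)) * \<rho> ^ Suc j * x 0) + QF n \<rho> sx"
    unfolding QF_def sx_def
    by (simp add: sum.lessThan_Suc_shift sum.distrib del: sum.lessThan_Suc)
  have a1: "(\<Sum>k<n. cnj (x 0) * \<rho> ^ Suc k * x (Suc k)) = cnj (x 0) * \<rho> * G"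
    unfolding G_def' by (simp add: sum_distrib_left algebra_simps)
  have a2: "(\<Sum>j<n. cnj (x (Suc j)) * \<rho> ^ Suc j * x 0) = x 0 * \<rho> * cnj G"
    unfolding cG by (simp add: sum_distrib_left algebra_simps)
  have g0: "gg (Suc n) \<rho> x 0 = x 0 + \<rho> * G" unfolding G_def sx_def by (rule gg_Suc_0)
  have sums: "(\<Sum>m<Suc n. gg (Suc n) \<rho> x m * cnj (gg (Suc n) \<rho> x m))
     = (x 0 + \<rho> * G) * cnj (x 0 + \<rho> * G) + (\<Sum>m<n. gg n \<rho> sx m * cnj (gg n \<rho> sx m))"
    by (simp add: sum.lessThan_Suc_shift g0 gg_Suc_Suc sx_def del: sum.lessThan_Suc)
  have IH: "QF n \<rho> sx = \<rho>^2 * (G * cnj G) + (1 - \<rho>^2) * (\<Sum>m<n. gg n \<rho> sx m * cnj (gg n \<rho> sx m))"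
    using Suc.IH[of sx] unfolding G_def .
  show ?case unfolding QFs a1 a2 IH sums g0
    using r by (simp add: algebra_simps power2_eq_square)
qed

lemma cnj_sq: "w * cnj w = complex_of_real ((cmod w)^2)"
  by (metis complex_norm_square)

definition RR :: "nat \<Rightarrow> real \<Rightarrow> (nat \<Rightarrow> complex) \<Rightarrow> real" where
  "RR n r x = r^2 * (cmod (gg n (of_real r) x 0))^2 + (1 - r^2) * (\<Sum>m<n. (cmod (gg n (of_real r) x m))^2)"

lemma QF_real: "QF n (of_real r) x = of_real (RR n r x)"
proof -
  have "QF n (of_real r) x = (of_real r)^2 * (gg n (of_real r) x 0 * cnj (gg n (of_real r) x 0))
          + (1 - (of_real r)^2) * (\<Sum>m<n. gg n (of_real r) x m * cnj (gg n (of_real r) x m))"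
    by (rule QF_id) simp
  also have "\<dots> = of_real (RR n r x)"
    unfolding RR_def cnj_sq by simp
  finally show ?thesis .
qed

lemma x_from_gg: "m < n \<Longrightarrow> x m = gg n \<rho> x m - \<rho> * gg n \<rho> x (Suc m)"
  using gg_rec[of m n \<rho> x] by simp

lemma RR_pos:
  assumes r: "\<bar>r\<bar> < 1" and j: "j < n" and xj: "x j \<noteq> 0"
  shows "RR n r x > 0"
proof -
  define \<rho> where "\<rho> = (of_real r :: complex)"
  have "\<exists>m<n. gg n \<rho> x m \<noteq> 0"
  proof (rule ccontr)
    assume "\<not> ?thesis"
    then have all: "\<And>m. m < n \<Longrightarrow> gg n \<rho> x m = 0" by auto
    have "gg n \<rho> x (Suc j) = 0"
    proof (cases "Suc j < n")
      case True then show ?thesis using all by simp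
    next
      case False then have "Suc j = n" using j by simp
      then show ?thesis using gg_n by simp
    qed
    then have "x j = 0" using x_from_gg[OF j, of x \<rho>] all[OF j] by simp
    then show False using xj by simp
  qed
  then obtain m where m: "m < n" "gg n \<rho> x m \<noteq> 0" by auto
  have S: "(\<Sum>m<n. (cmod (gg n \<rho> x m))^2) > 0"
    by (rule sum_pos2[of "{..<n}" m]) (use m in auto)
  have r2: "1 - r^2 > 0" using r by (simp add: abs_square_less_1)
  have "(1 - r^2) * (\<Sum>m<n. (cmod (gg n \<rho> x m))^2) > 0" using S r2 by simp
  moreover have "r^2 * (cmod (gg n \<rho> x 0))^2 \<ge> 0" by simp
  ultimately show ?thesis unfolding RR_def \<rho>_def by linarith
qed

lemma pt_upper:
  fixes u w :: complex and r :: real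
  shows "(cmod (u - of_real r * w))^2 \<le> (1 + \<bar>r\<bar>) * ((cmod u)^2 + \<bar>r\<bar> * (cmod w)^2)"
proof -
  define a where "a = \<bar>r\<bar>"
  define p where "p = cmod u"
  define q where "q = cmod w"
  have a0: "a \<ge> 0" "p \<ge> 0" "q \<ge> 0" unfolding a_def p_def q_def by auto
  have d: "cmod (u - of_real r * w) \<le> p + a * q"
    unfolding p_def q_def a_def using norm_triangle_ineq4[of u "of_real r * w"] by (simp add: norm_mult)
  have "(cmod (u - of_real r * w))^2 \<le> (p + a*q)^2"
    using d by (intro power_mono) auto
  also have "\<dots> \<le> (1 + a) * (p^2 + a * q^2)"
  proof -
    have "(1 + a) * (p^2 + a * q^2) = (p + a*q)^2 + a * (p - q)^2"
      by (simp add: power2_eq_square algebra_simps)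
    moreover have "a * (p - q)^2 \<ge> 0" using a0 by simp
    ultimately show ?thesis by linarith
  qed
  finally show ?thesis unfolding a_def p_def q_def .
qed

lemma pt_lower:
  fixes u w :: complex and r :: real
  assumes r: "\<bar>r\<bar> \<le> 1"
  shows "(cmod (u - of_real r * w))^2 \<ge> (1 - \<bar>r\<bar>) * ((cmod u)^2 - \<bar>r\<bar> * (cmod w)^2)"
proof -
  define a where "a = \<bar>r\<bar>"
  define p where "p = cmod u"
  define q where "q = cmod w"
  have a0: "a \<ge> 0" "p \<ge> 0" "q \<ge> 0" "a \<le> 1" unfolding a_def p_def q_def using r by auto
  have d: "cmod (u - of_real r * w) \<ge> p - a * q"
    unfolding p_def q_def a_def using norm_triangle_ineq2[of u "of_real r * w"] by (simp add: norm_mult)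
  show ?thesis
  proof (cases "p \<ge> a * q")
    case True
    have "(p - a*q)^2 \<le> (cmod (u - of_real r * w))^2"
      using d True by (intro power_mono) auto
    moreover have "(p - a*q)^2 = (1 - a) * (p^2 - a * q^2) + a * (p - q)^2"
      by (simp add: power2_eq_square algebra_simps)
    moreover have "a * (p - q)^2 \<ge> 0" using a0 by simp
    ultimately show ?thesis unfolding a_def[symmetric] p_def[symmetric] q_def[symmetric] by linarith
  next
    case False
    then have "p^2 \<le> (a*q)^2" using a0 by (intro power_mono) auto
    moreover have "(a*q)^2 \<le> a * q^2" using a0
      by (simp add: power2_eq_square mult_left_le_one_le mult.assoc mult_left_mono)
    ultimately have "p^2 - a * q^2 \<le> 0" by linarith
    then have "(1 - a) * (p^2 - a * q^2) \<le> 0" using a0 by (simp add: mult_nonneg_nonpos)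
    moreover have "(cmod (u - of_real r * w))^2 \<ge> 0" by simp
    ultimately show ?thesis unfolding a_def[symmetric] p_def[symmetric] q_def[symmetric] by linarith
  qed
qed

lemma RR_bounds:
  fixes n :: nat and x :: "nat \<Rightarrow> complex"
  assumes r: "\<bar>r\<bar> < 1"
  defines "N \<equiv> (\<Sum>m<n. (cmod (x m))^2)"
  shows "N * (1 - \<bar>r\<bar>) \<le> (1 + \<bar>r\<bar>) * RR n r x"
    and "(1 - \<bar>r\<bar>) * RR n r x \<le> (1 + \<bar>r\<bar>) * N"
proof -
  define a where "a = \<bar>r\<bar>"
  define \<rho> where "\<rho> = (of_real r :: complex)"
  define G where "G m = (cmod (gg n \<rho> x m))^2" for m
  define S where "S = (\<Sum>m<n. G m)"
  have a0: "0 \<le> a" "a < 1" using r unfolding a_def by auto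
  have G0: "G m \<ge> 0" for m unfolding G_def by simp
  have Gn: "G n = 0" unfolding G_def using gg_n by simp
  have shift: "(\<Sum>m<n. G (Suc m)) = S - G 0"
  proof -
    have "(\<Sum>m<Suc n. G m) = G 0 + (\<Sum>m<n. G (Suc m))" by (rule sum.lessThan_Suc_shift)
    moreover have "(\<Sum>m<Suc n. G m) = S + G n" unfolding S_def by simp
    ultimately show ?thesis using Gn by simp
  qed
  have xm: "cmod (x m) ^ 2 = (cmod (gg n \<rho> x m - of_real r * gg n \<rho> x (Suc m)))^2" if "m < n" for m
    using x_from_gg[OF that, of x \<rho>] unfolding \<rho>_def by simp
  have N_up: "N \<le> (\<Sum>m<n. (1 + a) * (G m + a * G (Suc m)))"
    unfolding N_def
    by (rule sum_mono) (simp add: xm pt_upper G_def a_def)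
  have N_lo: "(\<Sum>m<n. (1 - a) * (G m - a * G (Suc m))) \<le> N"
    unfolding N_def
    by (rule sum_mono) (simp add: xm pt_lower G_def a_def r less_imp_le)
  have e1: "(\<Sum>m<n. (1 + a) * (G m + a * G (Suc m))) = (1 + a) * (S + a * (S - G 0))"
    by (simp add: sum.distrib sum_distrib_left[symmetric] shift S_def)
  have e2: "(\<Sum>m<n. (1 - a) * (G m - a * G (Suc m))) = (1 - a) * (S - a * (S - G 0))"
    by (simp add: sum_subtractf sum_distrib_left[symmetric] shift S_def)
  have RRe: "RR n r x = a^2 * G 0 + (1 - a^2) * S"
    unfolding RR_def G_def S_def \<rho>_def a_def by simp
  have g0: "G 0 \<ge> 0" by (rule G0)
  show "N * (1 - \<bar>r\<bar>) \<le> (1 + \<bar>r\<bar>) * RR n r x"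
  proof -
    have h1: "N * (1 - a) \<le> ((1 + a) * (S + a * (S - G 0))) * (1 - a)"
      using N_up e1 a0 by (intro mult_right_mono) auto
    have h2: "0 \<le> (1 + a) * a * G 0" using a0 g0 by simp
    have eq: "(1 + a) * (a^2 * G 0 + (1 - a^2) * S) = ((1 + a) * (S + a * (S - G 0))) * (1 - a) + (1 + a) * a * G 0"
      by (simp add: power2_eq_square algebra_simps)
    show ?thesis unfolding RRe a_def[symmetric] using h1 h2 eq by linarith
  qed
  show "(1 - \<bar>r\<bar>) * RR n r x \<le> (1 + \<bar>r\<bar>) * N"
  proof -
    have h1: "(1 + a) * ((1 - a) * (S - a * (S - G 0))) \<le> (1 + a) * N"
      using N_lo e2 a0 by (intro mult_left_mono) auto
    have h2: "0 \<le> (1 - a) * a * G 0" using a0 g0 by simp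
    have eq: "(1 + a) * ((1 - a) * (S - a * (S - G 0))) = (1 - a) * (a^2 * G 0 + (1 - a^2) * S) + (1 - a) * a * G 0"
      by (simp add: power2_eq_square algebra_simps)
    show ?thesis unfolding RRe a_def[symmetric] using h1 h2 eq by linarith
  qed
qed

lemma KMS_carrier: "KMS n \<rho> \<in> carrier_mat n n"
  unfolding KMS_def by simp

lemma KMS_index: "i < n \<Longrightarrow> j < n \<Longrightarrow> KMS n \<rho> $$ (i, j) = \<rho> ^ dd i j"
  unfolding KMS_def dd_def by simp

lemma KMS_mult_vec: "v \<in> carrier_vec n \<Longrightarrow> i < n \<Longrightarrow>
    (KMS n \<rho> *\<^sub>v v) $ i = (\<Sum>k<n. \<rho> ^ dd i k * v $ k)"
  using KMS_carrier[of n \<rho>]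
  by (auto simp: scalar_prod_def KMS_index lessThan_atLeast0 intro!: sum.cong)

lemma quad_QF: "(\<Sum>j<n. \<Sum>k<n. cnj (x $ j) * KMS n \<rho> $$ (j, k) * x $ k) = QF n \<rho> (\<lambda>j. x $ j)"
  unfolding QF_def by (auto simp: KMS_index intro!: sum.cong)

lemma vec_nonzero: "x \<in> carrier_vec n \<Longrightarrow> x \<noteq> 0\<^sub>v n \<Longrightarrow> \<exists>j<n. x $ j \<noteq> 0"
  by (metis carrier_vecD eq_vecI index_zero_vec(1) index_zero_vec(2))

lemma C_imp_D:
  assumes r: "\<bar>r\<bar> < 1"
  shows "pos_def_mat n (KMS n (of_real r))"
  unfolding pos_def_mat_def Let_def quad_QF QF_real
proof (intro ballI impI conjI)
  fix x :: "complex vec" assume x: "x \<in> carrier_vec n" "x \<noteq> 0\<^sub>v n"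
  then obtain j where j: "j < n" "x $ j \<noteq> 0" using vec_nonzero by blast
  show "complex_of_real (RR n r (\<lambda>j. x $ j)) \<in> \<real>" by simp
  show "0 < Re (complex_of_real (RR n r (\<lambda>j. x $ j)))"
    using RR_pos[OF r j(1), of "\<lambda>j. x $ j"] j(2) by simp
qed

lemma sum_two:
  fixes f :: "nat \<Rightarrow> 'a::comm_monoid_add"
  assumes "n \<ge> 2" "\<And>j. j \<ge> 2 \<Longrightarrow> j < n \<Longrightarrow> f j = 0"
  shows "(\<Sum>j<n. f j) = f 0 + f 1"
proof -
  have "(\<Sum>j<n. f j) = (\<Sum>j<2. f j)"
    using assms by (intro sum.mono_neutral_right) auto
  also have "\<dots> = f 0 + f 1" by (simp add: numeral_2_eq_2)
  finally show ?thesis .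
qed

lemma D_test:
  assumes n: "n \<ge> 2" and s: "s * s = (1::complex)"
  defines "x \<equiv> vec n (\<lambda>j. if j = 0 then 1 else if j = 1 then s else 0)"
  shows "x \<in> carrier_vec n" "x \<noteq> 0\<^sub>v n"
    "(\<Sum>j<n. \<Sum>k<n. cnj (x $ j) * KMS n \<rho> $$ (j, k) * x $ k) = 2 + 2 * cnj s * \<rho>"
proof -
  show "x \<in> carrier_vec n" unfolding x_def by simp
  have x0: "x $ 0 = 1" unfolding x_def using n by simp
  show "x \<noteq> 0\<^sub>v n"
  proof
    assume "x = 0\<^sub>v n"
    then have "x $ 0 = 0" using n by simp
    then show False using x0 by simp
  qed
  have x1: "x $ 1 = s" unfolding x_def using n by simp
  have xj: "j \<ge> 2 \<Longrightarrow> j < n \<Longrightarrow> x $ j = 0" for j unfolding x_def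
    by simp
  have inner: "(\<Sum>k<n. cnj (x $ j) * KMS n \<rho> $$ (j, k) * x $ k)
      = cnj (x $ j) * KMS n \<rho> $$ (j, 0) * x $ 0 + cnj (x $ j) * KMS n \<rho> $$ (j, 1) * x $ 1" for j
    using n by (intro sum_two) (auto simp: xj)
  have "(\<Sum>j<n. \<Sum>k<n. cnj (x $ j) * KMS n \<rho> $$ (j, k) * x $ k)
     = (\<Sum>j<n. cnj (x $ j) * KMS n \<rho> $$ (j, 0) * x $ 0 + cnj (x $ j) * KMS n \<rho> $$ (j, 1) * x $ 1)"
    by (simp add: inner)
  also have "\<dots> = (cnj (x $ 0) * KMS n \<rho> $$ (0, 0) * x $ 0 + cnj (x $ 0) * KMS n \<rho> $$ (0, 1) * x $ 1)
      + (cnj (x $ 1) * KMS n \<rho> $$ (1, 0) * x $ 0 + cnj (x $ 1) * KMS n \<rho> $$ (1, 1) * x $ 1)"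
    using n by (intro sum_two) (auto simp: xj)
  also have "\<dots> = 1 + \<rho> * s + cnj s * \<rho> + cnj s * s"
    using n x1 by (simp add: x0 KMS_index dd_def)
  also have "1 + \<rho> * s + cnj s * \<rho> + cnj s * s = 2 + 2 * cnj s * \<rho>"
  proof -
    have "(s - 1) * (s + 1) = 0" using s by (simp add: algebra_simps)
    then have "s - 1 = 0 \<or> s + 1 = 0" by simp
    then have "s = 1 \<or> s = -1" by (auto simp: add_eq_0_iff2)
    then show ?thesis by (elim disjE) (simp_all add: algebra_simps)
  qed
  finally show "(\<Sum>j<n. \<Sum>k<n. cnj (x $ j) * KMS n \<rho> $$ (j, k) * x $ k) = 2 + 2 * cnj s * \<rho>" .
qed

lemma D_imp_C:
  assumes n: "n \<ge> 2" and D: "pos_def_mat n (KMS n \<rho>)"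
  shows "\<rho> \<in> \<real> \<and> -1 < Re \<rho> \<and> Re \<rho> < 1"
proof -
  have t: "(2 + 2 * cnj s * \<rho>) \<in> \<real> \<and> Re (2 + 2 * cnj s * \<rho>) > 0" if s: "s * s = (1::complex)" for s
  proof -
    define x where "x = vec n (\<lambda>j. if j = 0 then 1 else if j = 1 then s else (0::complex))"
    have c: "x \<in> carrier_vec n" "x \<noteq> 0\<^sub>v n"
      "(\<Sum>j<n. \<Sum>k<n. cnj (x $ j) * KMS n \<rho> $$ (j, k) * x $ k) = 2 + 2 * cnj s * \<rho>"
      unfolding x_def by (rule D_test[OF n s])+
    have "\<forall>x\<in>carrier_vec n. x \<noteq> 0\<^sub>v n \<longrightarrow>
     (let q = (\<Sum>j<n. \<Sum>k<n. cnj (x $ j) * KMS n \<rho> $$ (j, k) * x $ k) in q \<in> \<real> \<and> Re q > 0)"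
      using D unfolding pos_def_mat_def .
    then have "let q = (\<Sum>j<n. \<Sum>k<n. cnj (x $ j) * KMS n \<rho> $$ (j, k) * x $ k) in q \<in> \<real> \<and> Re q > 0"
      using c(1,2) by blast
    then show ?thesis unfolding Let_def c(3) .
  qed
  from t[of 1] have a: "2 + 2 * \<rho> \<in> \<real>" "Re \<rho> > -1" by auto
  from t[of "-1"] have b: "Re \<rho> < 1" by auto
  from a(1) have "Im (2 + 2 * \<rho>) = 0" by (simp only: complex_is_Real_iff)
  then have "\<rho> \<in> \<real>" by (simp add: complex_is_Real_iff)
  with a b show ?thesis by auto
qed

lemma sigma_real: "sigma (of_real r) \<theta> = of_real ((1 - r^2) / (1 - 2 * r * cos \<theta> + r^2))"
  unfolding sigma_def by simp

lemma in_sigma_range_real: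
  assumes "- pi < \<theta>" "\<theta> \<le> pi" "1 - 2 * r * cos \<theta> + r^2 \<noteq> 0"
  shows "of_real ((1 - r^2) / (1 - 2 * r * cos \<theta> + r^2)) \<in> sigma_range (of_real r)"
proof -
  have "1 - 2 * complex_of_real r * complex_of_real (cos \<theta>) + (complex_of_real r)^2
        = of_real (1 - 2 * r * cos \<theta> + r^2)" (is "?L = _") by simp
  then have nz: "?L \<noteq> 0"
    using assms(3) by (metis of_real_eq_0_iff)
  show ?thesis unfolding sigma_range_def sigma_real[symmetric]
    using assms(1,2) nz by (auto intro!: exI[of _ \<theta>])
qed

lemma C_imp_A:
  assumes r: "\<bar>r\<bar> < 1" and ev: "eigenvalue (KMS n (of_real r)) e"
  shows "e \<in> sigma_range (of_real r)"
proof -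
  define \<rho> where "\<rho> = (of_real r :: complex)"
  have dr: "dim_row (KMS n \<rho>) = n" unfolding KMS_def by simp
  from ev obtain v where v: "v \<in> carrier_vec n" "v \<noteq> 0\<^sub>v n" "KMS n \<rho> *\<^sub>v v = e \<cdot>\<^sub>v v"
    unfolding eigenvalue_def eigenvector_def \<rho>_def[symmetric] dr by auto
  define vf where "vf = (\<lambda>j. v $ j)"
  define N where "N = (\<Sum>m<n. (cmod (vf m))^2)"
  have QFe: "QF n \<rho> vf = e * of_real N"
  proof -
    have "QF n \<rho> vf = (\<Sum>j<n. cnj (v $ j) * (KMS n \<rho> *\<^sub>v v) $ j)"
      unfolding QF_def vf_def using v(1)
      by (auto simp: KMS_mult_vec sum_distrib_left mult.assoc intro!: sum.cong)
    also have "\<dots> = (\<Sum>j<n. e * (v $ j * cnj (v $ j)))"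
      using v(1) by (auto simp: v(3) intro!: sum.cong)
    also have "\<dots> = e * of_real N"
      unfolding N_def vf_def cnj_sq by (simp add: sum_distrib_left)
    finally show ?thesis .
  qed
  obtain j where j: "j < n" "v $ j \<noteq> 0" using vec_nonzero[OF v(1,2)] by blast
  have Npos: "N > 0" unfolding N_def
    by (rule sum_pos2[of "{..<n}" j]) (use j in \<open>auto simp: vf_def\<close>)
  have RRpos: "RR n r vf > 0" using RR_pos[OF r j(1), of vf] j(2) by (simp add: vf_def)
  have "of_real (RR n r vf) = e * of_real N" using QFe QF_real[of n r vf] unfolding \<rho>_def by simp
  then have e: "e = of_real (RR n r vf / N)" using Npos by (simp add: field_simps)
  define a where "a = \<bar>r\<bar>"
  have a0: "0 \<le> a" "a < 1" using r unfolding a_def by auto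
  have r2: "r^2 = a^2" unfolding a_def by simp
  note b1 = RR_bounds(1)[OF r, where n=n and x=vf, folded N_def a_def]
  note b2 = RR_bounds(2)[OF r, where n=n and x=vf, folded N_def a_def]
  define D where "D = (1 - r^2) * N / RR n r vf"
  have Dup: "D \<le> (1 + a)^2"
  proof -
    have "(1 + a) * (N * (1 - a)) \<le> (1 + a) * ((1 + a) * RR n r vf)"
      using b1 a0 by (intro mult_left_mono) auto
    then have "(1 - r^2) * N \<le> (1 + a)^2 * RR n r vf"
      unfolding r2 by (simp add: power2_eq_square algebra_simps)
    then show ?thesis unfolding D_def using RRpos by (simp add: divide_le_eq)
  qed
  have Dlo: "(1 - a)^2 \<le> D"
  proof -
    have "(1 - a) * ((1 - a) * RR n r vf) \<le> (1 - a) * ((1 + a) * N)"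
      using b2 a0 by (intro mult_left_mono) auto
    then have "(1 - a)^2 * RR n r vf \<le> (1 - r^2) * N"
      unfolding r2 by (simp add: power2_eq_square algebra_simps)
    then show ?thesis unfolding D_def using RRpos by (simp add: le_divide_eq)
  qed
  have Dpos: "D > 0"
  proof -
    have "(1 - a)^2 > 0" using a0 by simp
    then show ?thesis using Dlo by linarith
  qed
  have r2pos: "1 - r^2 > 0" using r by (simp add: abs_square_less_1)
  have lamD: "RR n r vf / N = (1 - r^2) / D"
  proof -
    have "(1 - r^2) / D = ((1 - r^2) * RR n r vf) / ((1 - r^2) * N)" unfolding D_def by simp
    also have "\<dots> = RR n r vf / N" using r2pos by simp
    finally show ?thesis by simp
  qed
  show ?thesis
  proof (cases "r = 0")
    case True
    then have "a = 0" unfolding a_def by simp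
    then have D1: "D = 1" using Dup Dlo by simp
    have "e = of_real ((1 - r^2) / (1 - 2 * r * cos 0 + r^2))" using e lamD True D1 by simp
    moreover have "of_real ((1 - r^2) / (1 - 2 * r * cos 0 + r^2)) \<in> sigma_range (of_real r)"
      by (rule in_sigma_range_real) (use True in auto)
    ultimately show ?thesis by simp
  next
    case False
    then have apos: "a > 0" unfolding a_def by simp
    define c where "c = (1 + r^2 - D) / (2 * r)"
    have bnd: "\<bar>1 + r^2 - D\<bar> \<le> 2 * a"
    proof -
      have "1 + a^2 - D \<le> 2 * a" using Dlo by (simp add: power2_eq_square algebra_simps)
      moreover have "-(2 * a) \<le> 1 + a^2 - D" using Dup by (simp add: power2_eq_square algebra_simps)
      ultimately show ?thesis unfolding r2 by linarith
    qed
    have "\<bar>c\<bar> = \<bar>1 + r^2 - D\<bar> / (2 * a)" unfolding c_def a_def by (simp add: abs_divide abs_mult)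
    also have "\<dots> \<le> 1" using bnd apos by (simp add: divide_le_eq)
    finally have cabs: "\<bar>c\<bar> \<le> 1" .
    have c1: "-1 \<le> c" "c \<le> 1" using cabs by linarith+
    define \<theta> where "\<theta> = arccos c"
    have th: "0 \<le> \<theta>" "\<theta> \<le> pi" "cos \<theta> = c" unfolding \<theta>_def using arccos[OF c1] by auto
    have den: "1 - 2 * r * cos \<theta> + r^2 = D"
    proof -
      have "2 * r * c = 1 + r^2 - D" unfolding c_def using False by simp
      then show ?thesis unfolding th(3) by linarith
    qed
    have "e = of_real ((1 - r^2) / (1 - 2 * r * cos \<theta> + r^2))" unfolding den using e lamD by simp
    moreover have "of_real ((1 - r^2) / (1 - 2 * r * cos \<theta> + r^2)) \<in> sigma_range (of_real r)"
    proof (rule in_sigma_range_real)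
      show "- pi < \<theta>" using th(1) pi_gt_zero by linarith
      show "\<theta> \<le> pi" by (rule th(2))
      show "1 - 2 * r * cos \<theta> + r^2 \<noteq> 0" unfolding den using Dpos by simp
    qed
    ultimately show ?thesis by simp
  qed
qed

lemma real_outside:
  assumes n: "n \<ge> 1" and r: "\<bar>r\<bar> > 1"
  shows "\<exists>z. p2n n (of_real r) z = 0 \<and> cmod z \<noteq> 1"
proof -
  define s where "s = \<bar>r\<bar>"
  define f where "f x = x^(n+1) - s * x^n - s * x + 1" for x :: real
  have f0: "f 0 = 1" unfolding f_def using n by simp
  have f1: "f 1 = 2 - 2 * s" unfolding f_def by simp
  have s1: "s > 1" using r unfolding s_def .
  have "\<exists>x\<ge>0. x \<le> 1 \<and> f x = 0"
  proof (rule IVT2)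
    show "f 1 \<le> 0" using f1 s1 by simp
    show "0 \<le> f 0" using f0 by simp
    show "(0::real) \<le> 1" by simp
    show "\<forall>x. 0 \<le> x \<and> x \<le> 1 \<longrightarrow> isCont f x" unfolding f_def by (intro allI impI) (intro continuous_intros)
  qed
  then obtain x where x: "0 \<le> x" "x \<le> 1" "f x = 0" by blast
  have x0: "x \<noteq> 0" using x(3) f0 by auto
  have x1: "x \<noteq> 1" using x(3) f1 s1 by auto
  have xl: "0 < x" "x < 1" using x x0 x1 by auto
  define t where "t = (if r > 0 then x else -x)"
  have tt: "t^2 = x^2" "r * t = s * x" "(t - r)^2 = (x - s)^2"
    unfolding t_def s_def by (auto simp: power2_eq_square algebra_simps)
  have fx: "x^n * (x - s) = -(1 - s * x)"
    using x(3) unfolding f_def by (simp add: algebra_simps)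
  have key: "(t^n * (t - r))^2 = (1 - r * t)^2"
  proof -
    have "(t^n * (t - r))^2 = (t^2)^n * (t - r)^2" by (simp add: power_mult_distrib power_mult[symmetric] mult.commute)
    also have "\<dots> = (x^2)^n * (x - s)^2" using tt by simp
    also have "\<dots> = (x^n * (x - s))^2" by (simp add: power_mult_distrib power_mult[symmetric] mult.commute)
    also have "\<dots> = (1 - s * x)^2" unfolding fx by (simp add: power2_eq_square algebra_simps)
    also have "\<dots> = (1 - r * t)^2" using tt by simp
    finally show ?thesis .
  qed
  define z where "z = (of_real t :: complex)"
  have keyc: "(z^n * (z - of_real r))^2 = (1 - of_real r * z)^2"
  proof -
    have "(z^n * (z - of_real r))^2 = of_real ((t^n * (t - r))^2)" unfolding z_def by simp
    also have "\<dots> = of_real ((1 - r * t)^2)" using key by simp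
    also have "\<dots> = (1 - of_real r * z)^2" unfolding z_def by simp
    finally show ?thesis .
  qed
  have "(z^2 - 1) * p2n n (of_real r) z = 0" using p2n_factor[OF n, of z "of_real r"] keyc by simp
  moreover have "z^2 \<noteq> 1"
  proof
    assume "z^2 = 1"
    then have "t^2 = 1" unfolding z_def by (metis of_real_eq_1_iff of_real_power)
    then have "x^2 = 1" using tt by simp
    then show False using xl by (simp add: power2_eq_square) (smt (verit) mult_less_cancel_right2)
  qed
  ultimately have "p2n n (of_real r) z = 0" by simp
  moreover have "cmod z \<noteq> 1" unfolding z_def t_def using xl by auto
  ultimately show ?thesis by blast
qed


definition Pp :: "nat \<Rightarrow> complex \<Rightarrow> complex poly" where
  "Pp n \<rho> = monom 1 (2*n) + Polynomial.smult (1 + \<rho>^2) (\<Sum>k\<in>{1..n-1}. monom 1 (2*k))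
     - Polynomial.smult (2*\<rho>) (\<Sum>k\<in>{0..n-1}. monom 1 (2*k+1)) + 1"

lemma poly_Pp: "poly (Pp n \<rho>) z = p2n n \<rho> z"
  unfolding Pp_def p2n_def by (simp add: poly_sum poly_monom)

lemma coeff_Pp:
  assumes n: "n \<ge> 1"
  shows "coeff (Pp n \<rho>) 1 = - 2 * \<rho>" "coeff (Pp n \<rho>) (2*n) = 1" "j > 2*n \<Longrightarrow> coeff (Pp n \<rho>) j = 0"
proof -
  have a1: "(\<Sum>k\<in>{1..n-1}. coeff (monom (1::complex) (2*k)) 1) = 0"
    by (intro sum.neutral) (auto simp: coeff_monom)
  have a2: "(\<Sum>k\<in>{0..n-1}. coeff (monom (1::complex) (2*k+1)) 1) = 1"
  proof -
    have "(\<Sum>k\<in>{0..n-1}. coeff (monom (1::complex) (2*k+1)) 1) = (\<Sum>k\<in>{0..n-1}. if k = 0 then 1 else 0)"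
      by (intro sum.cong) (auto simp: coeff_monom)
    also have "\<dots> = 1" by simp
    finally show ?thesis .
  qed
  show "coeff (Pp n \<rho>) 1 = - 2 * \<rho>"
    unfolding Pp_def coeff_add coeff_diff coeff_smult coeff_sum a1 a2 using n by (simp add: coeff_monom)
  have b1: "(\<Sum>k\<in>{1..n-1}. coeff (monom (1::complex) (2*k)) (2*n)) = 0"
    by (intro sum.neutral) (auto simp: coeff_monom)
  have b2: "(\<Sum>k\<in>{0..n-1}. coeff (monom (1::complex) (2*k+1)) (2*n)) = 0"
    by (intro sum.neutral) (auto simp: coeff_monom)
  show "coeff (Pp n \<rho>) (2*n) = 1"
    unfolding Pp_def coeff_add coeff_diff coeff_smult coeff_sum b1 b2 using n by (simp add: coeff_monom)
  assume j: "j > 2*n"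
  have c1: "(\<Sum>k\<in>{1..n-1}. coeff (monom (1::complex) (2*k)) j) = 0"
    using j by (intro sum.neutral) (auto simp: coeff_monom)
  have c2: "(\<Sum>k\<in>{0..n-1}. coeff (monom (1::complex) (2*k+1)) j) = 0"
    using j n by (intro sum.neutral) (auto simp: coeff_monom)
  show "coeff (Pp n \<rho>) j = 0"
    unfolding Pp_def coeff_add coeff_diff coeff_smult coeff_sum c1 c2 using n j by (simp add: coeff_monom)
qed

lemma degree_Pp: "n \<ge> 1 \<Longrightarrow> degree (Pp n \<rho>) = 2*n"
  using coeff_Pp[where n=n and \<rho>=\<rho>] by (intro antisym degree_le le_degree) auto

lemma lead_Pp: "n \<ge> 1 \<Longrightarrow> lead_coeff (Pp n \<rho>) = 1"
  using coeff_Pp[where n=n and \<rho>=\<rho>] degree_Pp[where n=n and \<rho>=\<rho>] by simp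


lemma cnj_mult_self: "cmod a = 1 \<Longrightarrow> cnj a * a = 1"
  by (metis complex_norm_square mult.commute of_real_1 one_power2)

lemma refl_prod:
  assumes "\<forall>a\<in>set as. cmod a = 1" "z \<noteq> 0"
  shows "z^(length as) * cnj (prod_list (map (\<lambda>a. 1 / cnj z - a) as))
       = cnj (prod_list (map (\<lambda>a. - a) as)) * prod_list (map (\<lambda>a. z - a) as)"
  using assms(1)
proof (induction as)
  case Nil then show ?case by simp
next
  case (Cons a as)
  have ca: "cnj a * a = 1" using Cons.prems by (simp add: cnj_mult_self)
  have IH: "z^(length as) * cnj (prod_list (map (\<lambda>a. 1 / cnj z - a) as))
       = cnj (prod_list (map (\<lambda>a. - a) as)) * prod_list (map (\<lambda>a. z - a) as)"
    using Cons by simp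
  have e1: "z * cnj (1 / cnj z - a) = cnj (- a) * (z - a)"
  proof -
    have "z * cnj (1 / cnj z - a) = z * (1 / z - cnj a)" by simp
    also have "\<dots> = 1 - z * cnj a" using assms(2) by (simp add: field_simps)
    also have "\<dots> = cnj (- a) * (z - a)" using ca by (simp add: algebra_simps)
    finally show ?thesis .
  qed
  have "z^(length (a # as)) * cnj (prod_list (map (\<lambda>a. 1 / cnj z - a) (a # as)))
      = (z * cnj (1 / cnj z - a)) * (z^(length as) * cnj (prod_list (map (\<lambda>a. 1 / cnj z - a) as)))"
    by (simp add: algebra_simps)
  also have "\<dots> = (cnj (- a) * (z - a)) * (cnj (prod_list (map (\<lambda>a. - a) as)) * prod_list (map (\<lambda>a. z - a) as))"
    unfolding e1 IH ..
  also have "\<dots> = cnj (prod_list (map (\<lambda>a. - a) (a # as))) * prod_list (map (\<lambda>a. z - a) (a # as))"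
    by (simp add: algebra_simps)
  finally show ?case .
qed

lemma H_alg:
  fixes z u A B c :: complex
  assumes "z * u = 1" "A * B = 1"
  shows "(A^2 * z^2) * (u^2 - 1) = A^2 * (1 - z^2)"
    and "(A^2 * z^2) * ((B * (u - c))^2 - (1 - c * u)^2) = (1 - c * z)^2 - (A * (z - c))^2"
proof -
  show "(A^2 * z^2) * (u^2 - 1) = A^2 * (1 - z^2)"
  proof -
    have "(A^2 * z^2) * (u^2 - 1) = A^2 * ((z*u)^2 - z^2)" by (simp add: power2_eq_square algebra_simps)
    also have "\<dots> = A^2 * (1 - z^2)" using assms(1) by simp
    finally show ?thesis .
  qed
  show "(A^2 * z^2) * ((B * (u - c))^2 - (1 - c * u)^2) = (1 - c * z)^2 - (A * (z - c))^2"
  proof -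
    have "(A^2 * z^2) * ((B * (u - c))^2 - (1 - c * u)^2) = (A*B)^2 * (z*u - c*z)^2 - A^2 * (z - c * (z*u))^2"
      by (simp add: power2_eq_square algebra_simps)
    also have "\<dots> = (1 - c * z)^2 - (A * (z - c))^2" using assms by (simp add: power2_eq_square)
    finally show ?thesis .
  qed
qed

lemma conj_sym:
  assumes n: "n \<ge> 1" and z: "z \<noteq> 0" "z^2 \<noteq> 1"
  shows "z^(2*n) * cnj (p2n n \<rho> (1 / cnj z)) = p2n n (cnj \<rho>) z"
proof -
  define w where "w = 1 / cnj z"
  define u where "u = 1 / z"
  have cw: "cnj w = u" unfolding w_def u_def by simp
  have zu: "z * u = 1" unfolding u_def using z by simp
  have AB: "z^n * u^n = 1" using zu by (metis power_mult_distrib power_one)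
  define P where "P = p2n n \<rho> w"
  have F: "(w^2 - 1) * P = (w^n * (w - \<rho>))^2 - (1 - \<rho> * w)^2"
    unfolding P_def by (rule p2n_factor[OF n])
  have cF: "(u^2 - 1) * cnj P = (u^n * (u - cnj \<rho>))^2 - (1 - cnj \<rho> * u)^2"
  proof -
    have "cnj ((w^2 - 1) * P) = cnj ((w^n * (w - \<rho>))^2 - (1 - \<rho> * w)^2)" using F by simp
    then show ?thesis unfolding cw[symmetric] by simp
  qed
  have z2n: "z^(2*n) = (z^n)^2" by (metis power_mult mult.commute)
  have zz: "z^(2*n+2) = (z^n)^2 * z^2" unfolding power_add z2n ..
  have "z^(2*n+2) * ((u^2 - 1) * cnj P) = (((z^n)^2 * z^2) * (u^2 - 1)) * cnj P"
    unfolding zz by (simp only: mult.assoc)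
  also have "\<dots> = (z^n)^2 * (1 - z^2) * cnj P" by (simp only: H_alg(1)[OF zu AB])
  finally have "z^(2*n+2) * ((u^2 - 1) * cnj P) = (z^n)^2 * (1 - z^2) * cnj P" .
  moreover have "z^(2*n+2) * ((u^n * (u - cnj \<rho>))^2 - (1 - cnj \<rho> * u)^2)
       = (1 - cnj \<rho> * z)^2 - (z^n * (z - cnj \<rho>))^2"
    unfolding zz by (rule H_alg(2)[OF zu AB])
  moreover have "(1 - cnj \<rho> * z)^2 - (z^n * (z - cnj \<rho>))^2 = - ((z^2 - 1) * p2n n (cnj \<rho>) z)"
    using p2n_factor[OF n, of z "cnj \<rho>"] by simp
  ultimately have "(z^n)^2 * (1 - z^2) * cnj P = - ((z^2 - 1) * p2n n (cnj \<rho>) z)"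
    using cF by simp
  then have "(1 - z^2) * ((z^n)^2 * cnj P - p2n n (cnj \<rho>) z) = 0" by (simp add: algebra_simps)
  then have "(z^n)^2 * cnj P = p2n n (cnj \<rho>) z" using z(2) by simp
  then show ?thesis unfolding P_def w_def z2n .
qed

lemma B_imp_real:
  assumes n: "n \<ge> 1" and B: "\<forall>z. p2n n \<rho> z = 0 \<longrightarrow> cmod z = 1"
  shows "\<rho> \<in> \<real>"
proof -
  obtain as where as: "Polynomial.smult (lead_coeff (Pp n \<rho>)) (\<Prod>a\<leftarrow>as. [:- a, 1:]) = Pp n \<rho>"
      "length as = degree (Pp n \<rho>)"
    using fundamental_theorem_algebra_factorized[of "Pp n \<rho>"] by blast
  have P: "Pp n \<rho> = (\<Prod>a\<leftarrow>as. [:- a, 1:])" using as(1) lead_Pp[OF n] by simp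
  have len: "length as = 2 * n" using as(2) degree_Pp[OF n] by simp
  have pz: "p2n n \<rho> z = prod_list (map (\<lambda>a. z - a) as)" for z
  proof -
    have "p2n n \<rho> z = poly (\<Prod>a\<leftarrow>as. [:- a, 1:]) z" using poly_Pp[of n \<rho> z] P by simp
    also have "\<dots> = prod_list (map (\<lambda>a. z - a) as)"
      by (induction as) (auto simp: algebra_simps)
    finally show ?thesis .
  qed
  have roots: "\<forall>a\<in>set as. cmod a = 1"
  proof
    fix a assume "a \<in> set as"
    then have "prod_list (map (\<lambda>b. a - b) as) = 0" by (auto simp: prod_list_zero_iff)
    then show "cmod a = 1" using B pz by simp
  qed
  have prod0: "prod_list (map (\<lambda>a. - a) as) = 1"
    using pz[of 0] p2n_zero[OF n] by simp
  have eq: "p2n n (cnj \<rho>) z = p2n n \<rho> z" if z: "z \<noteq> 0" "z^2 \<noteq> 1" for z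
  proof -
    have "p2n n (cnj \<rho>) z = z^(2*n) * cnj (p2n n \<rho> (1 / cnj z))" using conj_sym[OF n z] by simp
    also have "\<dots> = z^(length as) * cnj (prod_list (map (\<lambda>a. 1 / cnj z - a) as))" unfolding len pz ..
    also have "\<dots> = cnj (prod_list (map (\<lambda>a. - a) as)) * prod_list (map (\<lambda>a. z - a) as)"
      by (rule refl_prod[OF roots z(1)])
    also have "\<dots> = p2n n \<rho> z" unfolding prod0 pz by simp
    finally show ?thesis .
  qed
  define Q where "Q = Pp n \<rho> - Pp n (cnj \<rho>)"
  have Q0: "Q = 0"
  proof (rule ccontr)
    assume "Q \<noteq> 0"
    then have fin: "finite {z. poly Q z = 0}" by (rule poly_roots_finite)
    have "UNIV \<subseteq> {z. poly Q z = 0} \<union> {0, 1, -1}"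
    proof
      fix z :: complex
      show "z \<in> {z. poly Q z = 0} \<union> {0, 1, -1}"
      proof (cases "z = 0 \<or> z = 1 \<or> z = -1")
        case True then show ?thesis by auto
      next
        case False
        then have "z \<noteq> 0" "z^2 \<noteq> 1" by (auto simp: power2_eq_1_iff)
        then have "poly Q z = 0" unfolding Q_def using eq by (simp add: poly_Pp)
        then show ?thesis by simp
      qed
    qed
    then have "finite (UNIV :: complex set)" using fin by (meson finite.emptyI finite.insertI finite_Un finite_subset)
    then show False using infinite_UNIV_char_0 by blast
  qed
  have "coeff Q 1 = 0" using Q0 by simp
  then have "- 2 * \<rho> - (- 2 * cnj \<rho>) = 0" unfolding Q_def using coeff_Pp(1)[OF n] by simp
  then have "cnj \<rho> = \<rho>" by simp
  then show ?thesis by (simp add: Reals_cnj_iff)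
qed

definition te :: "nat \<Rightarrow> complex \<Rightarrow> nat \<Rightarrow> nat \<Rightarrow> complex" where
  "te n \<rho> i j = (if i = j then (if i = 0 \<or> i = n - 1 then 1 else 1 + \<rho>^2) else 0)
     + (if j = i + 1 then - \<rho> else 0) + (if i = j + 1 then - \<rho> else 0)"

definition dg :: "nat \<Rightarrow> complex \<Rightarrow> nat \<Rightarrow> complex" where
  "dg n \<rho> i = (if i = 0 \<or> i = n - 1 then 1 else 1 + \<rho>^2)"

lemma sum_delta_mult:
  fixes f :: "nat \<Rightarrow> complex"
  shows "j < n \<Longrightarrow> (\<Sum>k<n. f k * (if k = j then c else 0)) = f j * c"
  by (simp add: if_distrib[of "\<lambda>x. f _ * x"] sum.delta cong: if_cong)

lemma col_sum:
  fixes f :: "nat \<Rightarrow> complex"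
  assumes j: "j < n"
  shows "(\<Sum>k<n. f k * te n \<rho> k j) = f j * dg n \<rho> j
           + (if 0 < j then - \<rho> * f (j - 1) else 0) + (if j + 1 < n then - \<rho> * f (j + 1) else 0)"
proof -
  have "(\<Sum>k<n. f k * te n \<rho> k j) = (\<Sum>k<n. f k * (if k = j then dg n \<rho> j else 0))
      + (\<Sum>k<n. f k * (if k = j - 1 \<and> 0 < j then - \<rho> else 0))
      + (\<Sum>k<n. f k * (if k = j + 1 then - \<rho> else 0))"
    unfolding sum.distrib[symmetric] by (intro sum.cong) (auto simp: te_def dg_def algebra_simps)
  also have "(\<Sum>k<n. f k * (if k = j then dg n \<rho> j else 0)) = f j * dg n \<rho> j"
    using j by (rule sum_delta_mult)
  also have "(\<Sum>k<n. f k * (if k = j - 1 \<and> 0 < j then - \<rho> else 0)) = (if 0 < j then - \<rho> * f (j - 1) else 0)"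
  proof (cases "0 < j")
    case True
    then have "(\<Sum>k<n. f k * (if k = j - 1 \<and> 0 < j then - \<rho> else 0)) = (\<Sum>k<n. f k * (if k = j - 1 then - \<rho> else 0))"
      by simp
    also have "\<dots> = f (j - 1) * (- \<rho>)" using j by (intro sum_delta_mult) simp
    finally show ?thesis using True by simp
  qed simp
  also have "(\<Sum>k<n. f k * (if k = j + 1 then - \<rho> else 0)) = (if j + 1 < n then - \<rho> * f (j + 1) else 0)"
  proof (cases "j + 1 < n")
    case True
    then show ?thesis by (simp add: sum_delta_mult)
  next
    case False
    have "(\<Sum>k<n. f k * (if k = j + 1 then - \<rho> else 0)) = 0" using False by (intro sum.neutral) auto
    then show ?thesis using False by simp
  qed
  finally show ?thesis .
qed

lemma row_sum:
  fixes f :: "nat \<Rightarrow> complex"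
  assumes i: "i < n"
  shows "(\<Sum>j<n. te n \<rho> i j * f j) = f i * dg n \<rho> i
           + (if 0 < i then - \<rho> * f (i - 1) else 0) + (if i + 1 < n then - \<rho> * f (i + 1) else 0)"
proof -
  have "(\<Sum>j<n. te n \<rho> i j * f j) = (\<Sum>j<n. f j * te n \<rho> j i)"
    by (intro sum.cong) (auto simp: te_def mult.commute)
  then show ?thesis using col_sum[OF i, of f \<rho>] by simp
qed


lemma interior_val:
  assumes "0 < j"
  shows "(1 + \<rho>^2) * \<rho>^dd i j - \<rho> * \<rho>^dd i (j - 1) - \<rho> * \<rho>^dd i (j + 1) = (if i = j then 1 - \<rho>^2 else (0::complex))"
proof (cases "i = j")
  case True then show ?thesis using assms by (simp add: dd_def power2_eq_square)
next
  case False
  show ?thesis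
  proof (cases "i < j")
    case True
    then obtain t where t: "j = i + 1 + t" by (metis add.commute less_imp_Suc_add Suc_eq_plus1 add.assoc)
    have d: "dd i j = t + 1" "dd i (j - 1) = t" "dd i (j + 1) = t + 2" unfolding dd_def t by auto
    show ?thesis unfolding d using False by (simp add: power2_eq_square algebra_simps)
  next
    case ge: False
    then obtain t where t: "i = j + 1 + t" using False by (metis add.commute less_imp_Suc_add Suc_eq_plus1 add.assoc linorder_neqE_nat)
    have d: "dd i j = t + 1" "dd i (j - 1) = t + 2" "dd i (j + 1) = t" unfolding dd_def t using assms by auto
    show ?thesis unfolding d using False by (simp add: power2_eq_square algebra_simps)
  qed
qed

lemma KT_entry:
  assumes n: "n \<ge> 2" and i: "i < n" and j: "j < n"
  shows "(\<Sum>k<n. \<rho>^dd i k * te n \<rho> k j) = (if i = j then 1 - \<rho>^2 else 0)"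
proof -
  have cs: "(\<Sum>k<n. \<rho>^dd i k * te n \<rho> k j) = \<rho>^dd i j * dg n \<rho> j
           + (if 0 < j then - \<rho> * \<rho>^dd i (j - 1) else 0) + (if j + 1 < n then - \<rho> * \<rho>^dd i (j + 1) else 0)"
    by (rule col_sum[OF j])
  show ?thesis
  proof (cases "j = 0")
    case True
    have "j + 1 < n" using n True by simp
    then have "(\<Sum>k<n. \<rho>^dd i k * te n \<rho> k j) = \<rho>^dd i 0 - \<rho> * \<rho>^dd i 1"
      unfolding cs using True by (simp add: dg_def)
    also have "\<dots> = (if i = j then 1 - \<rho>^2 else 0)"
    proof (cases "i = 0")
      case True then show ?thesis using \<open>j = 0\<close> by (simp add: dd_def power2_eq_square)
    next
      case False
      then obtain t where "i = Suc t" by (cases i) auto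
      then show ?thesis using \<open>j = 0\<close> by (simp add: dd_def)
    qed
    finally show ?thesis .
  next
    case jpos: False
    show ?thesis
    proof (cases "j = n - 1")
      case True
      have "\<not> j + 1 < n" using True by simp
      then have "(\<Sum>k<n. \<rho>^dd i k * te n \<rho> k j) = \<rho>^dd i j - \<rho> * \<rho>^dd i (j - 1)"
        unfolding cs using True jpos by (simp add: dg_def)
      also have "\<dots> = (if i = j then 1 - \<rho>^2 else 0)"
      proof (cases "i = j")
        case True then show ?thesis using jpos by (simp add: dd_def power2_eq_square)
      next
        case False
        then have "i < j" using i \<open>j = n - 1\<close> by simp
        then obtain t where t: "j = i + 1 + t" by (metis add.commute less_imp_Suc_add Suc_eq_plus1 add.assoc)
        have d: "dd i j = t + 1" "dd i (j - 1) = t" unfolding dd_def t by auto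
        show ?thesis unfolding d using False by simp
      qed
      finally show ?thesis .
    next
      case False
      then have "j + 1 < n" using j by simp
      then have "(\<Sum>k<n. \<rho>^dd i k * te n \<rho> k j) = (1 + \<rho>^2) * \<rho>^dd i j - \<rho> * \<rho>^dd i (j - 1) - \<rho> * \<rho>^dd i (j + 1)"
        unfolding cs using False jpos by (simp add: dg_def algebra_simps)
      also have "\<dots> = (if i = j then 1 - \<rho>^2 else 0)" using jpos by (intro interior_val) simp
      finally show ?thesis .
    qed
  qed
qed


definition VV :: "nat \<Rightarrow> complex \<Rightarrow> complex \<Rightarrow> nat \<Rightarrow> complex" where
  "VV n \<rho> z j = (\<rho> - z) * z^(n + j + 1) + (1 - \<rho> * z) * z^(n - j)"

lemma last_id: "z * (((\<rho> - z) * W * z + (1 - \<rho> * z) * z) - \<rho> * ((\<rho> - z) * W + (1 - \<rho> * z) * z^2))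
          - (z - \<rho>) * (1 - \<rho> * z) * ((\<rho> - z) * W * z + (1 - \<rho> * z) * z)
          = - \<rho> * z * (W * z * (z - \<rho>)^2 - (1 - \<rho> * (z::complex))^2)"
  by (simp add: power2_eq_square field_simps)

lemma TV_row:
  assumes n: "n \<ge> 2" and i: "i < n" and E: "z^(2*n) * (z - \<rho>)^2 = (1 - \<rho> * z)^2"
  shows "z * (\<Sum>j<n. te n \<rho> i j * VV n \<rho> z j) = (z - \<rho>) * (1 - \<rho> * z) * VV n \<rho> z i"
proof -
  have rs: "(\<Sum>j<n. te n \<rho> i j * VV n \<rho> z j) = VV n \<rho> z i * dg n \<rho> i
           + (if 0 < i then - \<rho> * VV n \<rho> z (i - 1) else 0) + (if i + 1 < n then - \<rho> * VV n \<rho> z (i + 1) else 0)"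
    by (rule row_sum[OF i])
  show ?thesis
  proof (cases "i = 0")
    case True
    obtain m where m: "n = Suc m" using n by (cases n) auto
    define Z where "Z = z^m"
    have v0: "VV n \<rho> z 0 = (\<rho> - z) * Z * z^2 + (1 - \<rho> * z) * Z * z"
      unfolding VV_def Z_def m by (simp add: power2_eq_square algebra_simps)
    have v1: "VV n \<rho> z 1 = (\<rho> - z) * Z * z^3 + (1 - \<rho> * z) * Z"
      unfolding VV_def Z_def m by (simp add: power3_eq_cube power2_eq_square algebra_simps)
    have S: "(\<Sum>j<n. te n \<rho> 0 j * VV n \<rho> z j) = VV n \<rho> z 0 - \<rho> * VV n \<rho> z 1"
      using rs True n by (simp add: dg_def)
    show ?thesis unfolding True S v0 v1
      by (simp add: power3_eq_cube power2_eq_square algebra_simps)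
  next
    case ipos: False
    show ?thesis
    proof (cases "i + 1 < n")
      case True
      obtain k where k: "i = Suc k" using ipos by (cases i) auto
      obtain l where l: "n - k = l + 2" using True k by (metis add.commute add_2_eq_Suc' Suc_diff_Suc less_imp_Suc_add Suc_lessD Suc_eq_plus1 diff_Suc_Suc add_Suc_right less_diff_conv)
      define X where "X = z^(n + k + 1)"
      define Y where "Y = z^l"
      have va: "VV n \<rho> z k = (\<rho> - z) * X + (1 - \<rho> * z) * Y * z^2"
        unfolding VV_def X_def Y_def l by (simp add: power_add power2_eq_square algebra_simps)
      have vb: "VV n \<rho> z (Suc k) = (\<rho> - z) * X * z + (1 - \<rho> * z) * Y * z"
      proof -
        have "n - Suc k = l + 1" using l by simp
        moreover have "n + Suc k + 1 = (n + k + 1) + 1" by simp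
        ultimately show ?thesis unfolding VV_def X_def Y_def by (simp only: power_add power_one_right) (simp add: algebra_simps)
      qed
      have vc: "VV n \<rho> z (Suc (Suc k)) = (\<rho> - z) * X * z^2 + (1 - \<rho> * z) * Y"
      proof -
        have "n - Suc (Suc k) = l" using l by simp
        moreover have "n + Suc (Suc k) + 1 = (n + k + 1) + 2" by simp
        ultimately show ?thesis unfolding VV_def X_def Y_def by (simp only: power_add) (simp add: algebra_simps)
      qed
      have S: "(\<Sum>j<n. te n \<rho> (Suc k) j * VV n \<rho> z j) = (1 + \<rho>^2) * VV n \<rho> z (Suc k) - \<rho> * VV n \<rho> z k - \<rho> * VV n \<rho> z (Suc (Suc k))"
        using rs True k n by (simp add: dg_def algebra_simps)
      show ?thesis unfolding k S va vb vc
        by (simp add: power2_eq_square algebra_simps)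
    next
      case False
      then have iv: "i = n - 1" using i by simp
      obtain q where q: "2*n = Suc q" using n by (cases "2*n") auto
      define W where "W = z^q"
      have W2: "z^(2*n) = W * z" unfolding W_def q by (rule power_Suc2)
      have va: "VV n \<rho> z (n - 1) = (\<rho> - z) * W * z + (1 - \<rho> * z) * z"
      proof -
        have e: "n + (n - 1) + 1 = 2 * n" "n - (n - 1) = 1" using n by auto
        have "VV n \<rho> z (n - 1) = (\<rho> - z) * z^(2*n) + (1 - \<rho> * z) * z^1" unfolding VV_def e(1) e(2) ..
        then show ?thesis unfolding W2 by (simp add: mult.assoc)
      qed
      have vb: "VV n \<rho> z (n - 1 - 1) = (\<rho> - z) * W + (1 - \<rho> * z) * z^2"
      proof -
        have e: "n + (n - 1 - 1) + 1 = q" "n - (n - 1 - 1) = 2" using n q by auto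
        show ?thesis unfolding VV_def e(1) e(2) W_def ..
      qed
      have S: "(\<Sum>j<n. te n \<rho> (n - 1) j * VV n \<rho> z j) = VV n \<rho> z (n - 1) - \<rho> * VV n \<rho> z (n - 1 - 1)"
        using rs False ipos iv by (simp add: dg_def)
      have E': "W * z * (z - \<rho>)^2 - (1 - \<rho> * z)^2 = 0" using E unfolding W2 by simp
      note id = last_id[of z \<rho> W]
      have "z * (((\<rho> - z) * W * z + (1 - \<rho> * z) * z) - \<rho> * ((\<rho> - z) * W + (1 - \<rho> * z) * z^2))
          - (z - \<rho>) * (1 - \<rho> * z) * ((\<rho> - z) * W * z + (1 - \<rho> * z) * z) = 0"
        unfolding id E' by simp
      then show ?thesis unfolding iv S va vb by (simp only: right_minus_eq)
    qed
  qed
qed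


lemma root_eigen:
  assumes n: "n \<ge> 2" and r1: "\<rho>^2 \<noteq> 1" and p: "p2n n \<rho> z = 0" and z2: "z^2 \<noteq> 1"
  shows "z \<noteq> 0" "(z - \<rho>) * (1 - \<rho> * z) \<noteq> 0"
    "eigenvalue (KMS n \<rho>) ((1 - \<rho>^2) * z / ((z - \<rho>) * (1 - \<rho> * z)))"
proof -
  have n1: "n \<ge> 1" using n by simp
  show z0: "z \<noteq> 0" using p p2n_zero[OF n1, of \<rho>] by auto
  have "(z^n * (z - \<rho>))^2 = (1 - \<rho> * z)^2" using p2n_factor[OF n1, of z \<rho>] p by simp
  then have E: "z^(2*n) * (z - \<rho>)^2 = (1 - \<rho> * z)^2"
    by (simp add: power_mult_distrib power_mult[symmetric] mult.commute)
  have zr: "z \<noteq> \<rho>"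
  proof
    assume "z = \<rho>"
    then have "(1 - \<rho>^2)^2 = 0" using E by (simp add: power2_eq_square)
    then show False using r1 by simp
  qed
  have rz: "1 - \<rho> * z \<noteq> 0"
  proof
    assume h: "1 - \<rho> * z = 0"
    then have "z^(2*n) * (z - \<rho>)^2 = 0" using E by simp
    then show False using z0 zr by simp
  qed
  define mu where "mu = (z - \<rho>) * (1 - \<rho> * z)"
  show mu0: "(z - \<rho>) * (1 - \<rho> * z) \<noteq> 0" using zr rz by simp
  define v where "v = vec n (VV n \<rho> z)"
  have vc: "v \<in> carrier_vec n" unfolding v_def by simp
  have v0: "v $ 0 \<noteq> 0"
  proof -
    have "v $ 0 = VV n \<rho> z 0" unfolding v_def using n by simp
    also have "\<dots> = z^n * (1 - z^2)" unfolding VV_def by (simp add: power2_eq_square algebra_simps)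
    finally show ?thesis using z0 z2 by simp
  qed
  have vnz: "v \<noteq> 0\<^sub>v n"
  proof
    assume "v = 0\<^sub>v n"
    then have "v $ 0 = 0" using n by simp
    then show False using v0 by simp
  qed
  have comp: "mu * (KMS n \<rho> *\<^sub>v v) $ i = (1 - \<rho>^2) * z * v $ i" if i: "i < n" for i
  proof -
    have kv: "(KMS n \<rho> *\<^sub>v v) $ i = (\<Sum>k<n. \<rho>^dd i k * v $ k)" by (rule KMS_mult_vec[OF vc i])
    have "mu * (KMS n \<rho> *\<^sub>v v) $ i = (\<Sum>k<n. \<rho> ^ dd i k * (mu * VV n \<rho> z k))"
      unfolding kv sum_distrib_left by (intro sum.cong) (auto simp: v_def)
    also have "\<dots> = (\<Sum>k<n. \<rho> ^ dd i k * (z * (\<Sum>j<n. te n \<rho> k j * VV n \<rho> z j)))"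
      unfolding mu_def using TV_row[OF n _ E] by (intro sum.cong) auto
    also have "\<dots> = (\<Sum>k<n. \<Sum>j<n. z * (\<rho> ^ dd i k * te n \<rho> k j * VV n \<rho> z j))"
      by (intro sum.cong refl) (simp add: sum_distrib_left mult.assoc mult.left_commute)
    also have "\<dots> = (\<Sum>j<n. \<Sum>k<n. z * (\<rho> ^ dd i k * te n \<rho> k j * VV n \<rho> z j))"
      by (rule sum.swap)
    also have "\<dots> = z * (\<Sum>j<n. (\<Sum>k<n. \<rho> ^ dd i k * te n \<rho> k j) * VV n \<rho> z j)"
      by (simp add: sum_distrib_left sum_distrib_right mult.assoc)
    also have "\<dots> = z * (\<Sum>j<n. (if i = j then 1 - \<rho>^2 else 0) * VV n \<rho> z j)"
      using KT_entry[OF n i] by simp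
    also have "\<dots> = z * ((1 - \<rho>^2) * VV n \<rho> z i)"
    proof -
      have "(\<Sum>j<n. (if i = j then 1 - \<rho>^2 else 0) * VV n \<rho> z j)
          = (\<Sum>j<n. if j = i then (1 - \<rho>^2) * VV n \<rho> z j else 0)" by (intro sum.cong) auto
      also have "\<dots> = (1 - \<rho>^2) * VV n \<rho> z i" using i by simp
      finally show ?thesis by simp
    qed
    also have "\<dots> = (1 - \<rho>^2) * z * v $ i"
      using i unfolding v_def by simp
    finally show ?thesis .
  qed
  have "KMS n \<rho> *\<^sub>v v = ((1 - \<rho>^2) * z / mu) \<cdot>\<^sub>v v"
  proof (rule eq_vecI)
    show "dim_vec (KMS n \<rho> *\<^sub>v v) = dim_vec (((1 - \<rho>^2) * z / mu) \<cdot>\<^sub>v v)"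
      using vc KMS_carrier[of n \<rho>] by simp
    fix i assume "i < dim_vec (((1 - \<rho>^2) * z / mu) \<cdot>\<^sub>v v)"
    then have i: "i < n" using vc by simp
    have "(KMS n \<rho> *\<^sub>v v) $ i = (1 - \<rho>^2) * z * v $ i / mu"
      using comp[OF i] mu0 unfolding mu_def by (simp add: field_simps)
    then show "(KMS n \<rho> *\<^sub>v v) $ i = (((1 - \<rho>^2) * z / mu) \<cdot>\<^sub>v v) $ i"
      using i vc by simp
  qed
  moreover have "dim_row (KMS n \<rho>) = n" unfolding KMS_def by simp
  ultimately show "eigenvalue (KMS n \<rho>) ((1 - \<rho>^2) * z / ((z - \<rho>) * (1 - \<rho> * z)))"
    unfolding eigenvalue_def eigenvector_def mu_def using vc vnz by auto
qed

lemma A_imp_B_aux: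
  assumes n: "n \<ge> 2" and r1: "\<rho>^2 \<noteq> 1" and r0: "\<rho> \<noteq> 0"
    and A: "\<forall>e. eigenvalue (KMS n \<rho>) e \<longrightarrow> e \<in> sigma_range \<rho>"
    and p: "p2n n \<rho> z = 0"
  shows "cmod z = 1"
proof (cases "z^2 = 1")
  case True
  then have "z = 1 \<or> z = -1" by (simp add: power2_eq_1_iff)
  then show ?thesis by auto
next
  case False
  note re = root_eigen[OF n r1 p False]
  define mu where "mu = (z - \<rho>) * (1 - \<rho> * z)"
  have "(1 - \<rho>^2) * z / mu \<in> sigma_range \<rho>" using A re(3) unfolding mu_def by blast
  then obtain \<theta> where th: "(1 - \<rho>^2) * z / mu = sigma \<rho> \<theta>"
      "1 - 2 * \<rho> * complex_of_real (cos \<theta>) + \<rho>^2 \<noteq> 0"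
    unfolding sigma_range_def by blast
  define c where "c = complex_of_real (cos \<theta>)"
  define den where "den = 1 - 2 * \<rho> * c + \<rho>^2"
  have den0: "den \<noteq> 0" using th(2) unfolding den_def c_def .
  have mu0: "mu \<noteq> 0" using re(2) unfolding mu_def .
  have r2: "1 - \<rho>^2 \<noteq> 0" using r1 by simp
  have "(1 - \<rho>^2) * z / mu = (1 - \<rho>^2) / den" using th(1) unfolding sigma_def den_def c_def .
  then have "(1 - \<rho>^2) * (z * den) = (1 - \<rho>^2) * mu" using den0 mu0 by (simp add: field_simps)
  then have "z * den = mu" using r2 by simp
  then have "\<rho> * (z^2 - 2 * c * z + 1) = 0" unfolding den_def mu_def by (simp add: power2_eq_square algebra_simps)
  then have q: "z^2 - 2 * c * z + 1 = 0" using r0 by simp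
  have "(z - cis \<theta>) * (z - cis (- \<theta>)) = z^2 - (cis \<theta> + cis (- \<theta>)) * z + cis \<theta> * cis (- \<theta>)"
    by (simp add: power2_eq_square algebra_simps)
  also have "cis \<theta> + cis (- \<theta>) = 2 * c" unfolding c_def by (simp add: complex_eq_iff)
  also have "cis \<theta> * cis (- \<theta>) = 1" by (simp add: cis_mult)
  finally have "(z - cis \<theta>) * (z - cis (- \<theta>)) = 0" using q by simp
  then have "z = cis \<theta> \<or> z = cis (- \<theta>)" by simp
  then show ?thesis by auto
qed

theorem theorem3p5:
  fixes n :: nat and \<rho> :: complex
  assumes "n \<ge> 2" and "\<rho> \<noteq> 1" and "\<rho> \<noteq> -1"
  shows "((\<forall>e. eigenvalue (KMS n \<rho>) e \<longrightarrow> e \<in> sigma_range \<rho>)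
           \<longleftrightarrow> (\<forall>z. p2n n \<rho> z = 0 \<longrightarrow> cmod z = 1))
       \<and> ((\<forall>z. p2n n \<rho> z = 0 \<longrightarrow> cmod z = 1)
           \<longleftrightarrow> (\<rho> \<in> \<real> \<and> -1 < Re \<rho> \<and> Re \<rho> < 1))
       \<and> ((\<rho> \<in> \<real> \<and> -1 < Re \<rho> \<and> Re \<rho> < 1)
           \<longleftrightarrow> pos_def_mat n (KMS n \<rho>))"
proof -
  have n: "n \<ge> 2" and n1: "n \<ge> 1" using assms(1) by auto
  have r1: "\<rho>^2 \<noteq> 1" using assms(2,3) by (simp add: power2_eq_1_iff)
  let ?A = "\<forall>e. eigenvalue (KMS n \<rho>) e \<longrightarrow> e \<in> sigma_range \<rho>"
  let ?B = "\<forall>z. p2n n \<rho> z = 0 \<longrightarrow> cmod z = 1"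
  let ?C = "\<rho> \<in> \<real> \<and> -1 < Re \<rho> \<and> Re \<rho> < 1"
  let ?D = "pos_def_mat n (KMS n \<rho>)"
  have CB: "?B" if C: ?C
  proof -
    have e: "\<rho> = of_real (Re \<rho>)" using C by simp
    have r: "\<bar>Re \<rho>\<bar> < 1" using C by auto
    show ?B using C_imp_B[OF n1 r] e by metis
  qed
  have CA: "?A" if C: ?C
  proof -
    have e: "\<rho> = of_real (Re \<rho>)" using C by simp
    have r: "\<bar>Re \<rho>\<bar> < 1" using C by auto
    show ?A using C_imp_A[OF r, of n] e by metis
  qed
  have CD: "?D" if C: ?C
  proof -
    have e: "\<rho> = of_real (Re \<rho>)" using C by simp
    have r: "\<bar>Re \<rho>\<bar> < 1" using C by auto
    show ?D using C_imp_D[OF r, of n] e by metis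
  qed
  have DC: "?C" if D: ?D using D_imp_C[OF n D] .
  have BC: "?C" if B: ?B
  proof -
    have real: "\<rho> \<in> \<real>" using B_imp_real[OF n1 B] .
    then have e: "\<rho> = of_real (Re \<rho>)" by simp
    have "\<bar>Re \<rho>\<bar> < 1"
    proof (rule ccontr)
      assume "\<not> \<bar>Re \<rho>\<bar> < 1"
      moreover have "Re \<rho> \<noteq> 1" using assms(2) e by (metis of_real_1)
      moreover have "Re \<rho> \<noteq> -1" using assms(3) e by (metis of_real_1 of_real_minus)
      ultimately have "\<bar>Re \<rho>\<bar> > 1" by linarith
      then obtain z where z: "p2n n (of_real (Re \<rho>)) z = 0" "cmod z \<noteq> 1"
        using real_outside[OF n1] by blast
      then show False using B e by metis
    qed
    then show ?C using real by auto
  qed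
  have AB: "?B" if A: ?A
  proof (cases "\<rho> = 0")
    case True
    then have ?C by simp
    then show ?B by (rule CB)
  next
    case False
    show ?B using A_imp_B_aux[OF n r1 False A] by blast
  qed
  show ?thesis using AB BC CA CB CD DC by blast
qed

end
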